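(* Let $G$ be a connected graph with $V(G)=\{v_1,\dots,v_n\}$ and let $k_1,\dots,k_n$ be positive integers. If $S$ is a gp-set of $G$ that induces a complete subgraph of $G_{\rm SR}$, and $\min\{k_i:\ v_i\in S\}\ge \max\{k_i:\ v_i\notin S\}$, then $$\mathrm{gp}(G[K_{k_1},\dots,K_{k_n}])=\sum_{i:\,v_i\in S}k_i=\omega\big((G[K_{k_1},\dots,K_{k_n}])_{\rm SR}\big).$$
   Context: All graphs are finite and simple. For a graph $G$ with $V(G)=\{v_1,\dots,v_n\}$ and pairwise disjoint graphs $H_1,\dots,H_n$, the generalized lexicographic product $G[H_1,\dots,H_n]$ has vertex set $\bigcup_{i}\{(v_i,h): h\in V(H_i)\}$; $(v_i,h)$ and $(v_j,h')$ are adjacent iff either $v_iv_j\in E(G)$ (for arbitrary $h\in V(H_i)$, $h'\in V(H_j)$), or $i=j$ and $hh'\in E(H_i)$. That is, each $v_i$ is replaced by $H_i$ and each edge $v_iv_j$ by all edges between $H_i$ and $H_j$. For a connected graph $G$, a set $S\subseteq V(G)$ is a general position set if no three pairwise distinct vertices of $S$ lie on a common geodesic (shortest path); $\mathrm{gp}(G)$ is the maximum cardinality of a general position set, and a gp-set is a general position set of cardinality $\mathrm{gp}(G)$. A vertex $u$ is maximally distant from $v$ if every neighbor $w$ of $u$ satisfies $d_G(v,w)\le d_G(u,v)$; $u,v$ are mutually maximally distant (MMD) if each is maximally distant from the other. The strong resolving graph $G_{\rm SR}$ has vertex set $V(G)$, distinct vertices adjacent iff MMD in $G$. $\omega$ is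 the clique number. *)

theory Defs
  imports Main
begin

definition simple_graph :: "'a set \<Rightarrow> ('a \<Rightarrow> 'a \<Rightarrow> bool) \<Rightarrow> bool" where
  "simple_graph V E \<longleftrightarrow> finite V \<and> (\<forall>x y. E x y \<longrightarrow> x \<in> V \<and> y \<in> V)
     \<and> (\<forall>x y. E x y \<longrightarrow> E y x) \<and> (\<forall>x. \<not> E x x)"

text \<open>Walks as nonempty vertex lists; a walk with list xs has length (length xs - 1).\<close>
definition is_walk :: "'a set \<Rightarrow> ('a \<Rightarrow> 'a \<Rightarrow> bool) \<Rightarrow> 'a list \<Rightarrow> bool" where
  "is_walk V E xs \<longleftrightarrow> xs \<noteq> [] \<and> set xs \<subseteq> V \<and> (\<forall>i. Suc i < length xs \<longrightarrow> E (xs ! i) (xs ! Suc i))"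

definition connected_graph :: "'a set \<Rightarrow> ('a \<Rightarrow> 'a \<Rightarrow> bool) \<Rightarrow> bool" where
  "connected_graph V E \<longleftrightarrow> simple_graph V E \<and> V \<noteq> {} \<and>
     (\<forall>u\<in>V. \<forall>v\<in>V. \<exists>xs. is_walk V E xs \<and> hd xs = u \<and> last xs = v)"

definition gdist :: "'a set \<Rightarrow> ('a \<Rightarrow> 'a \<Rightarrow> bool) \<Rightarrow> 'a \<Rightarrow> 'a \<Rightarrow> nat" where
  "gdist V E u v = (LEAST n. \<exists>xs. is_walk V E xs \<and> hd xs = u \<and> last xs = v \<and> length xs = Suc n)"

definition is_geodesic :: "'a set \<Rightarrow> ('a \<Rightarrow> 'a \<Rightarrow> bool) \<Rightarrow> 'a list \<Rightarrow> bool" where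
  "is_geodesic V E xs \<longleftrightarrow> is_walk V E xs \<and> length xs = Suc (gdist V E (hd xs) (last xs))"

definition gp_set :: "'a set \<Rightarrow> ('a \<Rightarrow> 'a \<Rightarrow> bool) \<Rightarrow> 'a set \<Rightarrow> bool" where
  "gp_set V E S \<longleftrightarrow> S \<subseteq> V \<and>
     (\<forall>x\<in>S. \<forall>y\<in>S. \<forall>z\<in>S. x \<noteq> y \<and> y \<noteq> z \<and> x \<noteq> z \<longrightarrow>
        \<not> (\<exists>xs. is_geodesic V E xs \<and> x \<in> set xs \<and> y \<in> set xs \<and> z \<in> set xs))"

definition gp_number :: "'a set \<Rightarrow> ('a \<Rightarrow> 'a \<Rightarrow> bool) \<Rightarrow> nat" where
  "gp_number V E = Max {card S | S. gp_set V E S}"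

definition is_gp_maxset :: "'a set \<Rightarrow> ('a \<Rightarrow> 'a \<Rightarrow> bool) \<Rightarrow> 'a set \<Rightarrow> bool" where
  "is_gp_maxset V E S \<longleftrightarrow> gp_set V E S \<and> card S = gp_number V E"

definition max_distant :: "'a set \<Rightarrow> ('a \<Rightarrow> 'a \<Rightarrow> bool) \<Rightarrow> 'a \<Rightarrow> 'a \<Rightarrow> bool" where
  "max_distant V E u v \<longleftrightarrow> (\<forall>w. E u w \<longrightarrow> gdist V E v w \<le> gdist V E u v)"

definition mmd :: "'a set \<Rightarrow> ('a \<Rightarrow> 'a \<Rightarrow> bool) \<Rightarrow> 'a \<Rightarrow> 'a \<Rightarrow> bool" where
  "mmd V E u v \<longleftrightarrow> max_distant V E u v \<and> max_distant V E v u"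

text \<open>Strong resolving graph: vertex set V, adjacency of distinct MMD vertices.\<close>
definition SR_adj :: "'a set \<Rightarrow> ('a \<Rightarrow> 'a \<Rightarrow> bool) \<Rightarrow> 'a \<Rightarrow> 'a \<Rightarrow> bool" where
  "SR_adj V E u v \<longleftrightarrow> u \<in> V \<and> v \<in> V \<and> u \<noteq> v \<and> mmd V E u v"

definition is_clique :: "'a set \<Rightarrow> ('a \<Rightarrow> 'a \<Rightarrow> bool) \<Rightarrow> 'a set \<Rightarrow> bool" where
  "is_clique V E C \<longleftrightarrow> C \<subseteq> V \<and> (\<forall>x\<in>C. \<forall>y\<in>C. x \<noteq> y \<longrightarrow> E x y)"

definition clique_number :: "'a set \<Rightarrow> ('a \<Rightarrow> 'a \<Rightarrow> bool) \<Rightarrow> nat" where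
  "clique_number V E = Max {card C | C. is_clique V E C}"

text \<open>Generalized lexicographic product G[K_{k v} : v \<in> V]; the copy of K_{k v}
  has vertices (v, j) with j < k v.\<close>
definition lex_verts :: "'a set \<Rightarrow> ('a \<Rightarrow> nat) \<Rightarrow> ('a \<times> nat) set" where
  "lex_verts V k = {(v, j). v \<in> V \<and> j < k v}"

definition lex_adj :: "'a set \<Rightarrow> ('a \<Rightarrow> 'a \<Rightarrow> bool) \<Rightarrow> ('a \<Rightarrow> nat) \<Rightarrow> ('a \<times> nat) \<Rightarrow> ('a \<times> nat) \<Rightarrow> bool" where
  "lex_adj V E k p q \<longleftrightarrow> p \<in> lex_verts V k \<and> q \<in> lex_verts V k \<and>
     (E (fst p) (fst q) \<or> (fst p = fst q \<and> snd p \<noteq> snd q))"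

end

theory Submission
  imports Defs
begin

lemma walk_Cons2: "is_walk V E (x # y # ys) \<longleftrightarrow> x \<in> V \<and> E x y \<and> is_walk V E (y # ys)"
proof
  assume L: "is_walk V E (x # y # ys)"
  have A: "\<And>i. Suc i < length (x#y#ys) \<Longrightarrow> E ((x#y#ys)!i) ((x#y#ys)!Suc i)"
    using L unfolding is_walk_def by blast
  have "E x y" using A[of 0] by simp
  moreover have "\<And>i. Suc i < length (y#ys) \<Longrightarrow> E ((y#ys)!i) ((y#ys)!Suc i)"
  proof -
    fix i assume "Suc i < length (y#ys)"
    then show "E ((y#ys)!i) ((y#ys)!Suc i)" using A[of "Suc i"] by simp
  qed
  moreover have "set (x#y#ys) \<subseteq> V" using L unfolding is_walk_def by blast
  ultimately show "x \<in> V \<and> E x y \<and> is_walk V E (y # ys)" unfolding is_walk_def by simp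
next
  assume R: "x \<in> V \<and> E x y \<and> is_walk V E (y # ys)"
  have A: "\<And>i. Suc i < length (y#ys) \<Longrightarrow> E ((y#ys)!i) ((y#ys)!Suc i)"
    using R unfolding is_walk_def by blast
  have "\<And>i. Suc i < length (x#y#ys) \<Longrightarrow> E ((x#y#ys)!i) ((x#y#ys)!Suc i)"
  proof -
    fix i assume i: "Suc i < length (x#y#ys)"
    show "E ((x#y#ys)!i) ((x#y#ys)!Suc i)"
    proof (cases i)
      case 0 then show ?thesis using R by simp
    next
      case (Suc m) then show ?thesis using A[of m] i by simp
    qed
  qed
  moreover have "set (x#y#ys) \<subseteq> V" using R unfolding is_walk_def by simp
  ultimately show "is_walk V E (x # y # ys)" unfolding is_walk_def by blast
qed

lemma walk_single: "is_walk V E [x] \<longleftrightarrow> x \<in> V"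
  unfolding is_walk_def by simp

lemma walk_append: "is_walk V E xs \<Longrightarrow> is_walk V E ys \<Longrightarrow> last xs = hd ys \<Longrightarrow> is_walk V E (xs @ tl ys)"
proof (induction xs)
  case Nil then show ?case by (simp add: is_walk_def)
next
  case (Cons x xs)
  show ?case
  proof (cases xs)
    case Nil
    have "ys \<noteq> []" using Cons.prems(2) by (simp add: is_walk_def)
    then have "ys = x # tl ys" using Cons.prems(3) Nil by (metis last.simps list.collapse)
    then show ?thesis using Cons.prems(2) Nil by simp
  next
    case (Cons y zs)
    have w: "x \<in> V" "E x y" "is_walk V E (y # zs)" using Cons.prems(1) Cons walk_Cons2 by metis+
    have "is_walk V E ((y # zs) @ tl ys)" using Cons.IH Cons.prems w(3) Cons by simp
    then show ?thesis using w Cons by (simp add: walk_Cons2)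
  qed
qed

lemma walk_rev: "(\<forall>x y. E x y \<longrightarrow> E y x) \<Longrightarrow> is_walk V E xs \<Longrightarrow> is_walk V E (rev xs)"
proof (induction xs)
  case Nil then show ?case by (simp add: is_walk_def)
next
  case (Cons x xs)
  show ?case
  proof (cases xs)
    case Nil
    then show ?thesis using Cons.prems by simp
  next
    case (Cons y zs)
    have w: "x \<in> V" "E x y" "is_walk V E (y # zs)" using Cons.prems(2) Cons walk_Cons2 by metis+
    have r: "is_walk V E (rev (y # zs))" using Cons.IH Cons.prems w(3) Cons by simp
    have yV: "y \<in> V" using w(3) by (simp add: is_walk_def)
    have "is_walk V E [y, x]" using w Cons.prems(1) yV by (simp add: walk_Cons2 walk_single)
    from walk_append[OF r this] show ?thesis using Cons by simp
  qed
qed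

lemma walk_le: "is_walk V E xs \<Longrightarrow> gdist V E (hd xs) (last xs) \<le> length xs - 1"
  unfolding gdist_def
  apply (rule Least_le)
  apply (rule exI[of _ xs])
  by (simp add: is_walk_def)

lemma gdist_ex: "is_walk V E xs \<Longrightarrow> hd xs = u \<Longrightarrow> last xs = v \<Longrightarrow>
  \<exists>ys. is_walk V E ys \<and> hd ys = u \<and> last ys = v \<and> length ys = Suc (gdist V E u v)"
  unfolding gdist_def
  apply (rule LeastI_ex)
  apply (rule exI[of _ "length xs - 1"])
  apply (rule exI[of _ xs])
  by (simp add: is_walk_def)

lemma walk_sub: assumes "is_walk V E xs" "i \<le> j" "j < length xs"
  shows "gdist V E (xs ! i) (xs ! j) \<le> j - i"
proof -
  let ?ys = "drop i (take (Suc j) xs)"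
  have len: "length ?ys = Suc j - i" using assms by simp
  have s: "set ?ys \<subseteq> V" using assms(1) unfolding is_walk_def
    by (meson in_set_dropD in_set_takeD subset_iff)
  have n: "?ys \<noteq> []" using len assms by simp
  have e: "E (?ys ! m) (?ys ! Suc m)" if "Suc m < length ?ys" for m
  proof -
    have "?ys ! m = xs ! (i + m)" "?ys ! Suc m = xs ! (i + Suc m)" using that len assms by simp_all
    moreover have "Suc (i + m) < length xs" using that len assms by simp
    ultimately show ?thesis using assms(1) unfolding is_walk_def by simp
  qed
  have w: "is_walk V E ?ys" using s n e unfolding is_walk_def by blast
  have "hd ?ys = xs ! i" using assms by (simp add: hd_drop_conv_nth)
  moreover have "last ?ys = xs ! j" using assms n
    by (simp add: last_conv_nth)
  ultimately show ?thesis using walk_le[OF w] len by simp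
qed

lemma cg_short: assumes "connected_graph V E" "u \<in> V" "v \<in> V"
  shows "\<exists>ys. is_walk V E ys \<and> hd ys = u \<and> last ys = v \<and> length ys = Suc (gdist V E u v)"
proof -
  obtain xs where "is_walk V E xs" "hd xs = u" "last xs = v"
    using assms unfolding connected_graph_def by blast
  then show ?thesis using gdist_ex[of V E xs u v] by simp
qed

lemma cg_simple: "connected_graph V E \<Longrightarrow> simple_graph V E"
  by (simp add: connected_graph_def)

lemma cg_tri: assumes "connected_graph V E" "u \<in> V" "v \<in> V" "w \<in> V"
  shows "gdist V E u w \<le> gdist V E u v + gdist V E v w"
proof -
  obtain xs where xs: "is_walk V E xs" "hd xs = u" "last xs = v" "length xs = Suc (gdist V E u v)"
    using cg_short[OF assms(1) assms(2) assms(3)] by blast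
  obtain ys where ys: "is_walk V E ys" "hd ys = v" "last ys = w" "length ys = Suc (gdist V E v w)"
    using cg_short[OF assms(1) assms(3) assms(4)] by blast
  have w: "is_walk V E (xs @ tl ys)" using walk_append xs ys by metis
  have yn: "ys \<noteq> []" using ys by (simp add: is_walk_def)
  have xn: "xs \<noteq> []" using xs by (simp add: is_walk_def)
  have "hd (xs @ tl ys) = u" using xs xn by simp
  moreover have "last (xs @ tl ys) = w"
  proof -
    obtain a t where at: "ys = a # t" using yn by (cases ys) auto
    show ?thesis
    proof (cases "t = []")
      case True then show ?thesis using at xs ys by simp
    next
      case False then show ?thesis using at xs ys by simp
    qed
  qed
  moreover have "length (xs @ tl ys) = Suc (gdist V E u v + gdist V E v w)" using xs ys by simp
  ultimately show ?thesis using walk_le[OF w] by simp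
qed

lemma cg_sym_le: assumes "connected_graph V E" "u \<in> V" "v \<in> V"
  shows "gdist V E v u \<le> gdist V E u v"
proof -
  obtain xs where xs: "is_walk V E xs" "hd xs = u" "last xs = v" "length xs = Suc (gdist V E u v)"
    using cg_short[OF assms(1) assms(2) assms(3)] by blast
  have "\<forall>x y. E x y \<longrightarrow> E y x" using assms(1) by (simp add: connected_graph_def simple_graph_def)
  then have w: "is_walk V E (rev xs)" using walk_rev xs by metis
  have xn: "xs \<noteq> []" using xs by (simp add: is_walk_def)
  have "hd (rev xs) = v" "last (rev xs) = u" using xs xn by (simp_all add: hd_rev last_rev)
  then show ?thesis using walk_le[OF w] xs by simp
qed

lemma cg_sym: "connected_graph V E \<Longrightarrow> u \<in> V \<Longrightarrow> v \<in> V \<Longrightarrow> gdist V E u v = gdist V E v u"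
proof -
  assume a: "connected_graph V E" "u \<in> V" "v \<in> V"
  have "gdist V E u v \<le> gdist V E v u" using cg_sym_le[of V E v u] a by simp
  moreover have "gdist V E v u \<le> gdist V E u v" using cg_sym_le[of V E u v] a by simp
  ultimately show ?thesis by simp
qed

lemma cg_adj: assumes "connected_graph V E" "E u v" shows "gdist V E u v \<le> 1"
proof -
  have "u \<in> V" "v \<in> V" using assms by (auto simp: connected_graph_def simple_graph_def)
  then have "is_walk V E [u, v]" using assms by (simp add: walk_Cons2 walk_single)
  from walk_le[OF this] show ?thesis by simp
qed

lemma gd_refl: assumes "u \<in> V" shows "gdist V E u u = 0"
proof -
  have "is_walk V E [u]" using assms by (simp add: walk_single)
  from walk_le[OF this] show ?thesis by simp
qed

lemma cg_zero: assumes "connected_graph V E" "u \<in> V" "v \<in> V" "gdist V E u v = 0"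
  shows "u = v"
proof -
  obtain xs where xs: "is_walk V E xs" "hd xs = u" "last xs = v" "length xs = Suc (gdist V E u v)"
    using cg_short[OF assms(1) assms(2) assms(3)] by blast
  then have "length xs = Suc 0" using assms(4) by simp
  then obtain a where "xs = [a]" by (auto simp: length_Suc_conv)
  then show ?thesis using xs by simp
qed

lemma cg_step: assumes "connected_graph V E" "y \<in> V" "z \<in> V" "y \<noteq> z"
  shows "\<exists>w. E y w \<and> w \<in> V \<and> Suc (gdist V E w z) \<le> gdist V E y z"
proof -
  obtain xs where xs: "is_walk V E xs" "hd xs = y" "last xs = z" "length xs = Suc (gdist V E y z)"
    using cg_short[OF assms(1) assms(2) assms(3)] by blast
  have "gdist V E y z \<noteq> 0" using cg_zero[OF assms(1) assms(2) assms(3)] assms(4) by blast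
  then have "length xs \<ge> 2" using xs(4) by simp
  then obtain a w rest where r0: "xs = a # w # rest"
    by (metis One_nat_def Suc_1 length_Cons list.size(3) not_less_eq_eq zero_le neq_Nil_conv le_zero_eq nat.distinct(1))
  then have r: "xs = y # w # rest" using xs(2) by simp
  have w: "E y w" "is_walk V E (w # rest)" using xs(1) r walk_Cons2[of V E y w rest] by simp_all
  have wV: "w \<in> V" using w(2) by (simp add: is_walk_def)
  have "last (w # rest) = z" using xs r by simp
  then have "gdist V E w z \<le> length rest" using walk_le[OF w(2)] by simp
  then show ?thesis using w wV xs r by auto
qed

lemma cg_geo: assumes "connected_graph V E" "is_geodesic V E xs" "i < j" "j < l" "l < length xs"
  shows "gdist V E (xs ! i) (xs ! l) = gdist V E (xs ! i) (xs ! j) + gdist V E (xs ! j) (xs ! l)"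
proof -
  have w: "is_walk V E xs" and L: "length xs = Suc (gdist V E (hd xs) (last xs))"
    using assms(2) by (auto simp: is_geodesic_def)
  have xn: "xs \<noteq> []" using w by (simp add: is_walk_def)
  have hd: "hd xs = xs ! 0" using xn by (simp add: hd_conv_nth)
  have la: "last xs = xs ! (length xs - 1)" using xn by (simp add: last_conv_nth)
  have inV: "xs ! m \<in> V" if "m < length xs" for m using w that unfolding is_walk_def by auto
  let ?n = "length xs - 1"
  have a1: "gdist V E (xs!0) (xs!i) \<le> i" using walk_sub[OF w, of 0 i] assms by simp
  have a2: "gdist V E (xs!i) (xs!j) \<le> j - i" using walk_sub[OF w, of i j] assms by simp
  have a3: "gdist V E (xs!j) (xs!l) \<le> l - j" using walk_sub[OF w, of j l] assms by simp
  have a4: "gdist V E (xs!l) (xs!?n) \<le> ?n - l" using walk_sub[OF w, of l ?n] assms by simp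
  have iV: "xs!0 \<in> V" "xs!i \<in> V" "xs!j \<in> V" "xs!l \<in> V" "xs!?n \<in> V"
    using inV assms xn by simp_all
  have t0: "gdist V E (xs!0) (xs!?n) \<le> gdist V E (xs!0) (xs!i) + gdist V E (xs!i) (xs!?n)"
    using cg_tri[OF assms(1) iV(1) iV(2) iV(5)] .
  have t0': "gdist V E (xs!i) (xs!?n) \<le> gdist V E (xs!i) (xs!l) + gdist V E (xs!l) (xs!?n)"
    using cg_tri[OF assms(1) iV(2) iV(4) iV(5)] .
  have t0'': "gdist V E (xs!0) (xs!?n) \<le> gdist V E (xs!0) (xs!i) + gdist V E (xs!i) (xs!j) + gdist V E (xs!j) (xs!?n)"
    using cg_tri[OF assms(1) iV(1) iV(2) iV(5)] cg_tri[OF assms(1) iV(2) iV(3) iV(5)] by linarith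
  have t3: "gdist V E (xs!j) (xs!?n) \<le> gdist V E (xs!j) (xs!l) + gdist V E (xs!l) (xs!?n)"
    using cg_tri[OF assms(1) iV(3) iV(4) iV(5)] .
  have t1: "gdist V E (xs!0) (xs!?n) \<le> gdist V E (xs!0) (xs!i) + gdist V E (xs!i) (xs!l) + gdist V E (xs!l) (xs!?n)"
    using t0 t0' by linarith
  have t2: "gdist V E (xs!i) (xs!l) \<le> gdist V E (xs!i) (xs!j) + gdist V E (xs!j) (xs!l)"
    using cg_tri[OF assms(1) iV(2) iV(3) iV(4)] .
  have g: "gdist V E (xs!0) (xs!?n) = ?n" using L hd la by simp
  show ?thesis using a1 a2 a3 a4 t1 t2 t0'' t3 g assms by linarith
qed


lemma concat_walk: assumes "connected_graph V E" "u \<in> V" "v \<in> V" "w \<in> V"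
  shows "\<exists>zs. is_walk V E zs \<and> hd zs = u \<and> last zs = w \<and> v \<in> set zs \<and>
     length zs = Suc (gdist V E u v + gdist V E v w)"
proof -
  obtain xs where xs: "is_walk V E xs" "hd xs = u" "last xs = v" "length xs = Suc (gdist V E u v)"
    using cg_short[OF assms(1) assms(2) assms(3)] by blast
  obtain ys where ys: "is_walk V E ys" "hd ys = v" "last ys = w" "length ys = Suc (gdist V E v w)"
    using cg_short[OF assms(1) assms(3) assms(4)] by blast
  have w: "is_walk V E (xs @ tl ys)" using walk_append[OF xs(1) ys(1)] xs ys by simp
  have yn: "ys \<noteq> []" using ys by (simp add: is_walk_def)
  have xn: "xs \<noteq> []" using xs by (simp add: is_walk_def)
  have "hd (xs @ tl ys) = u" using xs xn by simp
  moreover have "last (xs @ tl ys) = w"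
  proof -
    obtain a t where at: "ys = a # t" using yn by (cases ys) auto
    show ?thesis
    proof (cases "t = []")
      case True then show ?thesis using at xs ys by simp
    next
      case False then show ?thesis using at xs ys by simp
    qed
  qed
  moreover have "v \<in> set (xs @ tl ys)" using last_in_set[OF xn] xs(3) by simp
  moreover have "length (xs @ tl ys) = Suc (gdist V E u v + gdist V E v w)" using xs ys by simp
  ultimately show ?thesis using w by blast
qed

lemma gp_char: assumes cg: "connected_graph V E"
  shows "gp_set V E S \<longleftrightarrow> S \<subseteq> V \<and> (\<forall>x\<in>S. \<forall>y\<in>S. \<forall>z\<in>S. x \<noteq> y \<and> y \<noteq> z \<and> x \<noteq> z \<longrightarrow>
      gdist V E x z \<noteq> gdist V E x y + gdist V E y z)"
proof
  assume g: "gp_set V E S"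
  have sub: "S \<subseteq> V" using g by (simp add: gp_set_def)
  have "gdist V E x z \<noteq> gdist V E x y + gdist V E y z"
    if xyz: "x \<in> S" "y \<in> S" "z \<in> S" "x \<noteq> y" "y \<noteq> z" "x \<noteq> z" for x y z
  proof
    assume eq: "gdist V E x z = gdist V E x y + gdist V E y z"
    have V: "x \<in> V" "y \<in> V" "z \<in> V" using xyz sub by auto
    obtain zs where zs: "is_walk V E zs" "hd zs = x" "last zs = z" "y \<in> set zs"
       "length zs = Suc (gdist V E x y + gdist V E y z)"
      using concat_walk[OF cg V(1) V(2) V(3)] by blast
    have zn: "zs \<noteq> []" using zs by (simp add: is_walk_def)
    have geo: "is_geodesic V E zs" using zs eq by (simp add: is_geodesic_def)
    have "x \<in> set zs" "z \<in> set zs" using zs zn by auto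
    have G: "\<forall>x\<in>S. \<forall>y\<in>S. \<forall>z\<in>S. x \<noteq> y \<and> y \<noteq> z \<and> x \<noteq> z \<longrightarrow>
        \<not> (\<exists>xs. is_geodesic V E xs \<and> x \<in> set xs \<and> y \<in> set xs \<and> z \<in> set xs)"
      using g unfolding gp_set_def by (rule conjunct2)
    have "\<not> (\<exists>xs. is_geodesic V E xs \<and> x \<in> set xs \<and> y \<in> set xs \<and> z \<in> set xs)"
      using G xyz(1) xyz(2) xyz(3) xyz(4) xyz(5) xyz(6) by (intro G[rule_format]) simp_all
    then show False using geo zs(4) \<open>x \<in> set zs\<close> \<open>z \<in> set zs\<close> by blast
  qed
  then show "S \<subseteq> V \<and> (\<forall>x\<in>S. \<forall>y\<in>S. \<forall>z\<in>S. x \<noteq> y \<and> y \<noteq> z \<and> x \<noteq> z \<longrightarrow>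
      gdist V E x z \<noteq> gdist V E x y + gdist V E y z)" using sub by blast
next
  assume R: "S \<subseteq> V \<and> (\<forall>x\<in>S. \<forall>y\<in>S. \<forall>z\<in>S. x \<noteq> y \<and> y \<noteq> z \<and> x \<noteq> z \<longrightarrow>
      gdist V E x z \<noteq> gdist V E x y + gdist V E y z)"
  have "\<not> (\<exists>xs. is_geodesic V E xs \<and> x \<in> set xs \<and> y \<in> set xs \<and> z \<in> set xs)"
    if xyz: "x \<in> S" "y \<in> S" "z \<in> S" "x \<noteq> y" "y \<noteq> z" "x \<noteq> z" for x y z
  proof
    assume "\<exists>xs. is_geodesic V E xs \<and> x \<in> set xs \<and> y \<in> set xs \<and> z \<in> set xs"
    then obtain xs where xs: "is_geodesic V E xs" "x \<in> set xs" "y \<in> set xs" "z \<in> set xs" by blast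
    obtain ix where ix: "ix < length xs" "xs ! ix = x" using xs(2) by (meson in_set_conv_nth)
    obtain iy where iy: "iy < length xs" "xs ! iy = y" using xs(3) by (meson in_set_conv_nth)
    obtain iz where iz: "iz < length xs" "xs ! iz = z" using xs(4) by (meson in_set_conv_nth)
    have H: "False" if "a < b" "b < c" "c < length xs" "xs!a \<in> S" "xs!b \<in> S" "xs!c \<in> S"
       "xs!a \<noteq> xs!b" "xs!b \<noteq> xs!c" "xs!a \<noteq> xs!c" for a b c
    proof -
      have "gdist V E (xs ! a) (xs ! c) = gdist V E (xs ! a) (xs ! b) + gdist V E (xs ! b) (xs ! c)"
        using cg_geo[OF cg xs(1) that(1) that(2) that(3)] .
      moreover have "gdist V E (xs ! a) (xs ! c) \<noteq> gdist V E (xs ! a) (xs ! b) + gdist V E (xs ! b) (xs ! c)"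
        using that(4-9) by (intro R[THEN conjunct2, rule_format]) simp_all
      ultimately show False by simp
    qed
    have ne: "ix \<noteq> iy" "iy \<noteq> iz" "ix \<noteq> iz" using ix iy iz xyz by auto
    show False
    proof (cases ix iy rule: linorder_cases)
      case less
      then show ?thesis
      proof (cases iy iz rule: linorder_cases)
        case less
        then show ?thesis using H[of ix iy iz] \<open>ix < iy\<close> ix iy iz xyz by simp
      next
        case equal then show ?thesis using ne by simp
      next
        case greater
        then show ?thesis
        proof (cases ix iz rule: linorder_cases)
          case less
          then show ?thesis using H[of ix iz iy] \<open>iz < iy\<close> ix iy iz xyz by simp
        next
          case equal then show ?thesis using ne by simp
        next
          case greater
          then show ?thesis using H[of iz ix iy] \<open>ix < iy\<close> ix iy iz xyz by simp
        qed
      qed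
    next
      case equal then show ?thesis using ne by simp
    next
      case greater
      then show ?thesis
      proof (cases ix iz rule: linorder_cases)
        case less
        then show ?thesis using H[of iy ix iz] \<open>iy < ix\<close> ix iy iz xyz by simp
      next
        case equal then show ?thesis using ne by simp
      next
        case greater
        then show ?thesis
        proof (cases iy iz rule: linorder_cases)
          case less
          then show ?thesis using H[of iy iz ix] \<open>iz < ix\<close> ix iy iz xyz by simp
        next
          case equal then show ?thesis using ne by simp
        next
          case greater
          then show ?thesis using H[of iz iy ix] \<open>iy < ix\<close> ix iy iz xyz by simp
        qed
      qed
    qed
  qed
  then show "gp_set V E S" using R[THEN conjunct1] unfolding gp_set_def by blast
qed

lemma sr_nobetw: assumes cg: "connected_graph V E" and V: "x \<in> V" "y \<in> V" "z \<in> V"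
  and ne: "y \<noteq> z" and md: "max_distant V E y x"
  shows "gdist V E x z \<noteq> gdist V E x y + gdist V E y z"
proof
  assume eq: "gdist V E x z = gdist V E x y + gdist V E y z"
  obtain w where w: "E y w" "w \<in> V" "Suc (gdist V E w z) \<le> gdist V E y z"
    using cg_step[OF cg V(2) V(3) ne] by blast
  have a: "gdist V E x z \<le> gdist V E x w + gdist V E w z" using cg_tri[OF cg V(1) w(2) V(3)] .
  have "\<forall>w. E y w \<longrightarrow> gdist V E x w \<le> gdist V E y x" using md unfolding max_distant_def .
  then have b: "gdist V E x w \<le> gdist V E y x" using w(1) by simp
  have c: "gdist V E y x = gdist V E x y" using cg_sym[OF cg V(2) V(1)] .
  show False using eq w(3) a b c by linarith
qed

lemma clique_gp: assumes cg: "connected_graph V E" and C: "is_clique V (SR_adj V E) C"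
  shows "gp_set V E C"
proof -
  have sub: "C \<subseteq> V" using C by (simp add: is_clique_def)
  have A: "\<forall>x\<in>C. \<forall>y\<in>C. x \<noteq> y \<longrightarrow> SR_adj V E x y" using C by (simp add: is_clique_def)
  have "gdist V E x z \<noteq> gdist V E x y + gdist V E y z"
    if xyz: "x \<in> C" "y \<in> C" "z \<in> C" "x \<noteq> y" "y \<noteq> z" "x \<noteq> z" for x y z
  proof -
    have "SR_adj V E y x" using A xyz(1) xyz(2) xyz(4) by simp
    then have md: "max_distant V E y x" by (simp add: SR_adj_def mmd_def)
    have "x \<in> V" "y \<in> V" "z \<in> V" using xyz sub by auto
    then show ?thesis using sr_nobetw[OF cg _ _ _ xyz(5) md] by simp
  qed
  then have "C \<subseteq> V \<and> (\<forall>x\<in>C. \<forall>y\<in>C. \<forall>z\<in>C. x \<noteq> y \<and> y \<noteq> z \<and> x \<noteq> z \<longrightarrow>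
      gdist V E x z \<noteq> gdist V E x y + gdist V E y z)" using sub by simp
  then show ?thesis using gp_char[OF cg] by simp
qed

lemma gp_fin: "finite V \<Longrightarrow> finite {card S |S. gp_set V E S}"
proof -
  assume f: "finite V"
  have "{card S |S. gp_set V E S} \<subseteq> card ` Pow V" unfolding gp_set_def by blast
  moreover have "finite (card ` Pow V)" using f by simp
  ultimately show ?thesis by (rule finite_subset)
qed

lemma cl_fin: "finite V \<Longrightarrow> finite {card S |S. is_clique V R S}"
proof -
  assume f: "finite V"
  have "{card S |S. is_clique V R S} \<subseteq> card ` Pow V" unfolding is_clique_def by blast
  moreover have "finite (card ` Pow V)" using f by simp
  ultimately show ?thesis by (rule finite_subset)
qed

lemma gp_le: assumes "finite V" "gp_set V E T" shows "card T \<le> gp_number V E"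
proof -
  have "card T \<in> {card S |S. gp_set V E S}" using assms(2) by blast
  then show ?thesis unfolding gp_number_def by (rule Max_ge[OF gp_fin[OF assms(1)]])
qed

lemma gp_eq: assumes "finite V" "gp_set V E T" "\<And>T'. gp_set V E T' \<Longrightarrow> card T' \<le> card T"
  shows "gp_number V E = card T"
  unfolding gp_number_def
proof (rule Max_eqI[OF gp_fin[OF assms(1)]])
  fix y assume "y \<in> {card S |S. gp_set V E S}"
  then show "y \<le> card T" using assms(3) by blast
next
  show "card T \<in> {card S |S. gp_set V E S}" using assms(2) by blast
qed

lemma clique_eq: assumes "finite V" "is_clique V R T" "\<And>T'. is_clique V R T' \<Longrightarrow> card T' \<le> card T"
  shows "clique_number V R = card T"
  unfolding clique_number_def
proof (rule Max_eqI[OF cl_fin[OF assms(1)]])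
  fix y assume "y \<in> {card S |S. is_clique V R S}"
  then show "y \<le> card T" using assms(3) by blast
next
  show "card T \<in> {card S |S. is_clique V R S}" using assms(2) by blast
qed


lemma lex_mem: "(a, i) \<in> lex_verts V k \<longleftrightarrow> a \<in> V \<and> i < k a"
  by (simp add: lex_verts_def)

lemma lex_Sigma: "lex_verts V k = Sigma V (\<lambda>v. {..<k v})"
  by (auto simp: lex_verts_def)

lemma prod_simple: assumes "simple_graph V E"
  shows "simple_graph (lex_verts V k) (lex_adj V E k)"
proof -
  have sg: "finite V" "\<forall>x y. E x y \<longrightarrow> E y x" "\<forall>x. \<not> E x x"
    using assms by (simp_all add: simple_graph_def)
  have f: "finite (lex_verts V k)" using sg(1) by (simp add: lex_Sigma)
  have s: "lex_adj V E k y x" if "lex_adj V E k x y" for x y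
    using that sg(2) unfolding lex_adj_def by auto
  have i: "\<not> lex_adj V E k x x" for x using sg(3) unfolding lex_adj_def by auto
  have m: "x \<in> lex_verts V k \<and> y \<in> lex_verts V k" if "lex_adj V E k x y" for x y
    using that unfolding lex_adj_def by simp
  show ?thesis unfolding simple_graph_def using f s i m by blast
qed

lemma lift_walk: assumes "is_walk V E xs" "\<forall>v\<in>set xs. c v < k v"
  shows "is_walk (lex_verts V k) (lex_adj V E k) (map (\<lambda>v. (v, c v)) xs)"
proof -
  have xn: "xs \<noteq> []" and sV: "set xs \<subseteq> V"
    and e: "\<And>i. Suc i < length xs \<Longrightarrow> E (xs ! i) (xs ! Suc i)"
    using assms(1) unfolding is_walk_def by auto
  have mem: "(v, c v) \<in> lex_verts V k" if "v \<in> set xs" for v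
    using that sV assms(2) by (auto simp: lex_verts_def)
  have s: "set (map (\<lambda>v. (v, c v)) xs) \<subseteq> lex_verts V k" using mem by auto
  have a: "lex_adj V E k (map (\<lambda>v. (v, c v)) xs ! i) (map (\<lambda>v. (v, c v)) xs ! Suc i)"
    if "Suc i < length (map (\<lambda>v. (v, c v)) xs)" for i
  proof -
    have l: "Suc i < length xs" "i < length xs" using that by auto
    have "xs ! i \<in> set xs" "xs ! Suc i \<in> set xs" using l by simp_all
    then show ?thesis using mem e[OF l(1)] l unfolding lex_adj_def by simp
  qed
  show ?thesis unfolding is_walk_def using xn s a by simp
qed

lemma lift_ends: assumes "is_walk V E xs" "hd xs = a" "last xs = b" "a \<noteq> b"
  "i < k a" "j < k b" "\<forall>v\<in>V. 0 < k v"
  shows "\<exists>ys. is_walk (lex_verts V k) (lex_adj V E k) ys \<and> hd ys = (a, i) \<and> last ys = (b, j)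
     \<and> length ys = length xs"
proof -
  define c where "c = (\<lambda>v. if v = a then i else if v = b then j else 0)"
  have sV: "set xs \<subseteq> V" and xn: "xs \<noteq> []" using assms(1) unfolding is_walk_def by auto
  have "\<forall>v\<in>set xs. c v < k v" using sV assms(5-7) unfolding c_def by auto
  then have w: "is_walk (lex_verts V k) (lex_adj V E k) (map (\<lambda>v. (v, c v)) xs)"
    using lift_walk[OF assms(1)] by blast
  have "hd (map (\<lambda>v. (v, c v)) xs) = (a, i)" using xn assms(2) by (simp add: hd_map c_def)
  moreover have "last (map (\<lambda>v. (v, c v)) xs) = (b, j)" using xn assms(3,4) by (simp add: last_map c_def)
  ultimately show ?thesis using w by (intro exI[of _ "map (\<lambda>v. (v, c v)) xs"]) simp
qed

lemma prod_conn: assumes cg: "connected_graph V E" and kp: "\<forall>v\<in>V. 0 < k v"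
  shows "connected_graph (lex_verts V k) (lex_adj V E k)"
proof -
  have sg: "simple_graph (lex_verts V k) (lex_adj V E k)" using prod_simple cg_simple[OF cg] by blast
  obtain v where v: "v \<in> V" using cg unfolding connected_graph_def by blast
  have "(v, 0) \<in> lex_verts V k" using v kp by (simp add: lex_mem)
  then have ne: "lex_verts V k \<noteq> {}" by blast
  have "\<exists>xs. is_walk (lex_verts V k) (lex_adj V E k) xs \<and> hd xs = p \<and> last xs = q"
    if pq: "p \<in> lex_verts V k" "q \<in> lex_verts V k" for p q
  proof -
    obtain a i b j where p: "p = (a, i)" and q: "q = (b, j)" by (cases p, cases q) auto
    have ai: "a \<in> V" "i < k a" "b \<in> V" "j < k b" using pq p q by (simp_all add: lex_mem)
    show ?thesis
    proof (cases "a = b")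
      case True
      show ?thesis
      proof (cases "i = j")
        case True
        then have "is_walk (lex_verts V k) (lex_adj V E k) [p]" using pq by (simp add: walk_single)
        then show ?thesis using True p q \<open>a = b\<close> by (intro exI[of _ "[p]"]) simp
      next
        case False
        have "lex_adj V E k p q" using pq p q False True unfolding lex_adj_def by simp
        then have "is_walk (lex_verts V k) (lex_adj V E k) [p, q]" using pq by (simp add: walk_Cons2 walk_single)
        then show ?thesis by (intro exI[of _ "[p, q]"]) simp
      qed
    next
      case False
      obtain xs where xs: "is_walk V E xs" "hd xs = a" "last xs = b"
        using cg ai unfolding connected_graph_def by blast
      show ?thesis using lift_ends[OF xs False ai(2) ai(4) kp] p q by blast
    qed
  qed
  then show ?thesis unfolding connected_graph_def using sg ne by blast
qed

lemma proj_walk: assumes cg: "connected_graph V E"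
  shows "is_walk (lex_verts V k) (lex_adj V E k) ys \<Longrightarrow> gdist V E (fst (hd ys)) (fst (last ys)) \<le> length ys - 1"
proof (induction ys)
  case Nil then show ?case by (simp add: is_walk_def)
next
  case (Cons y ys)
  show ?case
  proof (cases ys)
    case Nil
    have "y \<in> lex_verts V k" using Cons.prems Nil by (simp add: walk_single)
    then have "fst y \<in> V" by (cases y) (simp add: lex_mem)
    then show ?thesis using Nil gd_refl by simp
  next
    case (Cons y' rest)
    have w: "y \<in> lex_verts V k" "lex_adj V E k y y'" "is_walk (lex_verts V k) (lex_adj V E k) (y' # rest)"
      using Cons.prems Cons walk_Cons2[of "lex_verts V k" "lex_adj V E k" y y' rest] by simp_all
    have IH: "gdist V E (fst y') (fst (last (y' # rest))) \<le> length rest"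
      using Cons.IH Cons w(3) by simp
    have y'V: "y' \<in> lex_verts V k" using w(3) by (simp add: is_walk_def)
    have lV: "last (y' # rest) \<in> lex_verts V k" using w(3) last_in_set[of "y' # rest"]
      unfolding is_walk_def by blast
    have V3: "fst y \<in> V" "fst y' \<in> V" "fst (last (y' # rest)) \<in> V"
      using w(1) y'V lV by (auto simp: lex_verts_def)
    have d1: "gdist V E (fst y) (fst y') \<le> 1"
    proof (cases "fst y = fst y'")
      case True then show ?thesis using gd_refl[OF V3(2), of E] by simp
    next
      case False
      then have "E (fst y) (fst y')" using w(2) unfolding lex_adj_def by simp
      then show ?thesis using cg_adj[OF cg] by simp
    qed
    have "gdist V E (fst y) (fst (last (y' # rest))) \<le> gdist V E (fst y) (fst y') + gdist V E (fst y') (fst (last (y' # rest)))"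
      using cg_tri[OF cg V3(1) V3(2) V3(3)] .
    then show ?thesis using d1 IH Cons by simp
  qed
qed

lemma D_diff: assumes cg: "connected_graph V E" and kp: "\<forall>v\<in>V. 0 < k v"
  and p: "(a, i) \<in> lex_verts V k" and q: "(b, j) \<in> lex_verts V k" and ne: "a \<noteq> b"
  shows "gdist (lex_verts V k) (lex_adj V E k) (a, i) (b, j) = gdist V E a b"
proof -
  have ai: "a \<in> V" "i < k a" "b \<in> V" "j < k b" using p q by (simp_all add: lex_mem)
  obtain xs where xs: "is_walk V E xs" "hd xs = a" "last xs = b" "length xs = Suc (gdist V E a b)"
    using cg_short[OF cg ai(1) ai(3)] by blast
  obtain ys where ys: "is_walk (lex_verts V k) (lex_adj V E k) ys" "hd ys = (a, i)" "last ys = (b, j)"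
     "length ys = length xs"
    using lift_ends[OF xs(1) xs(2) xs(3) ne ai(2) ai(4) kp] by blast
  have le1: "gdist (lex_verts V k) (lex_adj V E k) (a, i) (b, j) \<le> gdist V E a b"
    using walk_le[OF ys(1)] ys xs by simp
  have pc: "connected_graph (lex_verts V k) (lex_adj V E k)" using prod_conn[OF cg kp] .
  obtain zs where zs: "is_walk (lex_verts V k) (lex_adj V E k) zs" "hd zs = (a, i)" "last zs = (b, j)"
    "length zs = Suc (gdist (lex_verts V k) (lex_adj V E k) (a, i) (b, j))"
    using cg_short[OF pc p q] by blast
  have "gdist V E a b \<le> gdist (lex_verts V k) (lex_adj V E k) (a, i) (b, j)"
    using proj_walk[OF cg zs(1)] zs by simp
  then show ?thesis using le1 by simp
qed

lemma D_same: assumes p: "(a, i) \<in> lex_verts V k" and q: "(a, j) \<in> lex_verts V k"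
  shows "gdist (lex_verts V k) (lex_adj V E k) (a, i) (a, j) \<le> 1"
proof (cases "i = j")
  case True then show ?thesis using gd_refl[OF p] by simp
next
  case False
  have "lex_adj V E k (a, i) (a, j)" using p q False unfolding lex_adj_def by simp
  then have "is_walk (lex_verts V k) (lex_adj V E k) [(a, i), (a, j)]" using p q
    by (simp add: walk_Cons2 walk_single)
  from walk_le[OF this] show ?thesis by simp
qed


lemma comb_sum: fixes k :: "'a \<Rightarrow> nat"
  assumes fS: "finite S" and fP: "finite P" and c: "card P \<le> card S"
    and le: "\<forall>u\<in>S. \<forall>w\<in>P - S. k w \<le> k u"
  shows "sum k P \<le> sum k S"
proof -
  have cP: "card P = card (P \<inter> S) + card (P - S)" using card_Int_Diff[OF fP] .
  have cS: "card S = card (S \<inter> P) + card (S - P)" using card_Int_Diff[OF fS] .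
  have cc: "card (P - S) \<le> card (S - P)" using c cP cS by (simp add: Int_commute)
  have sP: "sum k P = sum k (P \<inter> S) + sum k (P - S)" using sum.Int_Diff[OF fP] .
  have sS: "sum k S = sum k (S \<inter> P) + sum k (S - P)" using sum.Int_Diff[OF fS] .
  have key: "sum k (P - S) \<le> sum k (S - P)"
  proof (cases "S - P = {}")
    case True
    have "card (S - P) = 0" using True by (simp only: card.empty)
    then have "card (P - S) = 0" using cc by linarith
    then have e: "P - S = {}" using fP by simp
    show ?thesis by (simp only: e sum.empty le0)
  next
    case False
    define m where "m = Min (k ` (S - P))"
    have fin: "finite (k ` (S - P))" using fS by simp
    have ne: "k ` (S - P) \<noteq> {}" using False by simp
    have a: "k w \<le> m" if "w \<in> P - S" for w
      unfolding m_def using le that fin ne by (simp add: Min_ge_iff)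
    have b: "m \<le> k u" if "u \<in> S - P" for u
      unfolding m_def using that fin by simp
    have "sum k (P - S) \<le> card (P - S) * m" using sum_bounded_above[of "P - S" k m] a by simp
    also have "\<dots> \<le> card (S - P) * m" using cc by simp
    also have "\<dots> \<le> sum k (S - P)" using sum_bounded_below[of "S - P" m k] b by simp
    finally show ?thesis .
  qed
  show ?thesis using sP sS key by (simp add: Int_commute)
qed

theorem theorem5p1:
  fixes V :: "'a set" and E :: "'a \<Rightarrow> 'a \<Rightarrow> bool" and k :: "'a \<Rightarrow> nat" and S :: "'a set"
  assumes "connected_graph V E"
    and "\<forall>v\<in>V. 0 < k v"
    and "is_gp_maxset V E S"
    and "is_clique V (SR_adj V E) S"
    and "\<forall>u\<in>S. \<forall>w\<in>V - S. k w \<le> k u"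
  shows "gp_number (lex_verts V k) (lex_adj V E k) = (\<Sum>v\<in>S. k v)
    \<and> (\<Sum>v\<in>S. k v) = clique_number (lex_verts V k)
         (SR_adj (lex_verts V k) (lex_adj V E k))"
proof -
  note cg = assms(1) and kp = assms(2)
  let ?PV = "lex_verts V k" and ?PE = "lex_adj V E k"
  let ?D = "gdist ?PV ?PE"
  let ?d = "gdist V E"
  define T0 where "T0 = lex_verts S k"
  have gpS: "gp_set V E S" and cardS: "card S = gp_number V E" using assms(3) by (simp_all add: is_gp_maxset_def)
  have sub: "S \<subseteq> V" using assms(4) by (simp add: is_clique_def)
  have finV: "finite V" using cg by (simp add: connected_graph_def simple_graph_def)
  have finS: "finite S" using finV sub finite_subset by blast
  have pc: "connected_graph ?PV ?PE" using prod_conn[OF cg kp] .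
  have finPV: "finite ?PV" using finV by (simp add: lex_Sigma)
  have T0sub: "T0 \<subseteq> ?PV" using sub unfolding T0_def lex_verts_def by auto
  have cardT0: "card T0 = (\<Sum>v\<in>S. k v)" using finS unfolding T0_def lex_Sigma by simp
  have Spos: "1 \<le> ?D p q" if "p \<in> ?PV" "q \<in> ?PV" "p \<noteq> q" for p q
    using cg_zero[OF pc that(1) that(2)] that(3) by (cases "?D p q = 0") auto
  have Sgp: "\<forall>x\<in>S. \<forall>y\<in>S. \<forall>z\<in>S. x \<noteq> y \<and> y \<noteq> z \<and> x \<noteq> z \<longrightarrow> ?d x z \<noteq> ?d x y + ?d y z"
    using gpS gp_char[OF cg] by blast
  have gpT0: "gp_set ?PV ?PE T0"
  proof -
    have "?D p r \<noteq> ?D p q + ?D q r"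
      if pqr: "p \<in> T0" "q \<in> T0" "r \<in> T0" "p \<noteq> q" "q \<noteq> r" "p \<noteq> r" for p q r
    proof -
      obtain a i where p: "p = (a, i)" by (cases p) auto
      obtain b j where q: "q = (b, j)" by (cases q) auto
      obtain c l where r: "r = (c, l)" by (cases r) auto
      have inS: "a \<in> S" "b \<in> S" "c \<in> S" using pqr p q r unfolding T0_def by (simp_all add: lex_mem)
      have inP: "p \<in> ?PV" "q \<in> ?PV" "r \<in> ?PV" using pqr T0sub by auto
      have d1: "1 \<le> ?D p q" "1 \<le> ?D q r" using Spos inP pqr by auto
      show ?thesis
      proof (cases "a = c")
        case True
        then have "?D p r \<le> 1" using D_same inP p r by simp
        then show ?thesis using d1 by linarith
      next
        case ac: False
        have Dpr: "?D p r = ?d a c" using D_diff[OF cg kp] inP p r ac by simp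
        show ?thesis
        proof (cases "a = b")
          case True
          have "?D q r = ?d a c" using D_diff[OF cg kp] inP q r ac True by simp
          then show ?thesis using Dpr d1 by linarith
        next
          case ab: False
          show ?thesis
          proof (cases "b = c")
            case True
            have "?D p q = ?d a c" using D_diff[OF cg kp] inP p q ab True by simp
            then show ?thesis using Dpr d1 by linarith
          next
            case bc: False
            have "?D p q = ?d a b" "?D q r = ?d b c"
              using D_diff[OF cg kp] inP p q r ab bc by simp_all
            moreover have "?d a c \<noteq> ?d a b + ?d b c" using Sgp inS ab bc ac by blast
            ultimately show ?thesis using Dpr by simp
          qed
        qed
      qed
    qed
    then show ?thesis using gp_char[OF pc] T0sub by blast
  qed
  have ub: "card T \<le> (\<Sum>v\<in>S. k v)" if gT: "gp_set ?PV ?PE T" for T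
  proof -
    have Tsub: "T \<subseteq> ?PV" using gT by (simp add: gp_set_def)
    have Tgp: "\<forall>x\<in>T. \<forall>y\<in>T. \<forall>z\<in>T. x \<noteq> y \<and> y \<noteq> z \<and> x \<noteq> z \<longrightarrow> ?D x z \<noteq> ?D x y + ?D y z"
      using gT gp_char[OF pc] by blast
    define P where "P = fst ` T"
    have Psub: "P \<subseteq> V" using Tsub unfolding P_def lex_verts_def by auto
    have "?d x z \<noteq> ?d x y + ?d y z"
      if xyz: "x \<in> P" "y \<in> P" "z \<in> P" "x \<noteq> y" "y \<noteq> z" "x \<noteq> z" for x y z
    proof -
      obtain p where p: "p \<in> T" "fst p = x" using xyz(1) unfolding P_def by blast
      obtain q where q: "q \<in> T" "fst q = y" using xyz(2) unfolding P_def by blast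
      obtain r where r: "r \<in> T" "fst r = z" using xyz(3) unfolding P_def by blast
      have inP: "(x, snd p) \<in> ?PV" "(y, snd q) \<in> ?PV" "(z, snd r) \<in> ?PV"
        using p q r Tsub by (metis prod.collapse subsetD)+
      have e: "p = (x, snd p)" "q = (y, snd q)" "r = (z, snd r)" using p q r by (metis prod.collapse)+
      have "?D p r = ?d x z" "?D p q = ?d x y" "?D q r = ?d y z"
        using D_diff[OF cg kp inP(1) inP(3) xyz(6)] D_diff[OF cg kp inP(1) inP(2) xyz(4)]
          D_diff[OF cg kp inP(2) inP(3) xyz(5)] e by simp_all
      moreover have "p \<noteq> q" "q \<noteq> r" "p \<noteq> r" using p q r xyz by auto
      then have "?D p r \<noteq> ?D p q + ?D q r" using Tgp p(1) q(1) r(1) by blast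
      ultimately show ?thesis by simp
    qed
    then have gpP: "gp_set V E P" using gp_char[OF cg] Psub by blast
    have cP: "card P \<le> card S" using gp_le[OF finV gpP] cardS by simp
    have finP: "finite P" using Psub finV finite_subset by blast
    have "T \<subseteq> Sigma P (\<lambda>v. {..<k v})" using Tsub unfolding P_def lex_verts_def by force
    moreover have "finite (Sigma P (\<lambda>v. {..<k v}))" using finP by simp
    ultimately have "card T \<le> card (Sigma P (\<lambda>v. {..<k v}))" by (rule card_mono[rotated])
    also have "\<dots> = (\<Sum>v\<in>P. k v)" using finP by simp
    also have "\<dots> \<le> (\<Sum>v\<in>S. k v)"
      using comb_sum[OF finS finP cP] assms(5) Psub by blast
    finally show ?thesis .
  qed
  have G: "gp_number ?PV ?PE = (\<Sum>v\<in>S. k v)"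
    using gp_eq[OF finPV gpT0] ub cardT0 by simp
  have md: "max_distant ?PV ?PE p q" if pq: "p \<in> T0" "q \<in> T0" "p \<noteq> q" for p q
  proof -
    obtain a i where p: "p = (a, i)" by (cases p) auto
    obtain b j where q: "q = (b, j)" by (cases q) auto
    have inS: "a \<in> S" "b \<in> S" using pq p q unfolding T0_def by (simp_all add: lex_mem)
    have inP: "p \<in> ?PV" "q \<in> ?PV" using pq T0sub by auto
    have "?D q w \<le> ?D p q" if w: "?PE p w" for w
    proof -
      obtain c l where wc: "w = (c, l)" by (cases w) auto
      have wP: "w \<in> ?PV" and adj: "E a c \<or> (a = c \<and> i \<noteq> l)"
        using w p wc unfolding lex_adj_def by auto
      have cV: "c \<in> V" using wP wc by (simp add: lex_mem)
      have aV: "a \<in> V" "b \<in> V" using inS sub by auto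
      show ?thesis
      proof (cases "a = b")
        case True
        have "?D p q \<ge> 1" using Spos inP pq by simp
        moreover have "?D q w \<le> 1"
        proof (cases "c = b")
          case True then show ?thesis using D_same inP wP q wc by simp
        next
          case False
          then have "E b c" using adj \<open>a = b\<close> by auto
          then have "?d b c \<le> 1" using cg_adj[OF cg] by simp
          then show ?thesis using D_diff[OF cg kp] inP wP q wc False by simp
        qed
        ultimately show ?thesis by simp
      next
        case ab: False
        have Dpq: "?D p q = ?d a b" using D_diff[OF cg kp] inP p q ab by simp
        have dpos: "1 \<le> ?d a b" using Spos[OF inP pq(3)] Dpq by simp
        have mmd: "max_distant V E a b" using assms(4) inS ab
          unfolding is_clique_def SR_adj_def mmd_def by blast
        show ?thesis
        proof (cases "c = b")
          case True
          then have "?D q w \<le> 1" using D_same inP wP q wc by simp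
          then show ?thesis using Dpq dpos by simp
        next
          case cb: False
          have Dqw: "?D q w = ?d b c" using D_diff[OF cg kp] inP wP q wc cb by simp
          show ?thesis
          proof (cases "c = a")
            case True
            then show ?thesis using Dqw Dpq cg_sym[OF cg aV(2) aV(1)] by simp
          next
            case False
            then have "E a c" using adj by auto
            then have "?d b c \<le> ?d a b" using mmd unfolding max_distant_def by blast
            then show ?thesis using Dqw Dpq by simp
          qed
        qed
      qed
    qed
    then show ?thesis unfolding max_distant_def by blast
  qed
  have clT0: "is_clique ?PV (SR_adj ?PV ?PE) T0"
    unfolding is_clique_def SR_adj_def mmd_def using T0sub md by blast
  have cub: "card C \<le> (\<Sum>v\<in>S. k v)" if "is_clique ?PV (SR_adj ?PV ?PE) C" for C
    using ub[OF clique_gp[OF pc that]] .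
  have C: "clique_number ?PV (SR_adj ?PV ?PE) = (\<Sum>v\<in>S. k v)"
    using clique_eq[OF finPV clT0] cub cardT0 by simp
  show ?thesis using G C by simp
qed

end
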